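(* Let $\alpha>-1$ and $s\in\mathbb N$. Then for every integer $n\ge s$, $$J_n^{(\alpha,-s)}(u)=\frac{(n-s)!}{n!}\,(1+u)^s\,\widehat P_{n-s}^{(\alpha,s)}(u),$$ and consequently, for $n\ge s$, $$J_n^{(\alpha,-s)}(u)=\frac{(-1)^s2^s}{(-\alpha-n)_s}\,A_{n-s}^{(\alpha,s)}\,P_n^{(\alpha,-s)}(u).$$
   Context: $(a)_k=a(a+1)\cdots(a+k-1)$ is the Pochhammer symbol. For real parameters $\alpha,\beta$ and $n\in\mathbb N_0$, the Jacobi polynomial is $P_n^{(\alpha,\beta)}(u)=\sum_{k=0}^n\frac{(\alpha+k+1)_{n-k}\,(-n)_k\,(n+\alpha+\beta+1)_k}{n!\,k!}\left(\frac{1-u}{2}\right)^k$ (i.e. $\frac{(\alpha+1)_n}{n!}{}_2F_1(-n,n+\alpha+\beta+1;\alpha+1;\frac{1-u}{2})$, defined for all real parameters). Whenever $(n+\alpha+\beta+1)_n\neq0$ put $A_n^{(\alpha,\beta)}=\frac{2^n}{(n+\alpha+\beta+1)_n}$ and $\widehat P_n^{(\alpha,\beta)}=A_n^{(\alpha,\beta)}P_n^{(\alpha,\beta)}$. For $s\in\mathbb N$ and $\alpha>-1-s$, define polynomials $J_n^{(\alpha,-s)}$, $n\in\mathbb N_0$, by $J_n^{(\alpha,-s)}(u)=\frac{(u+1)^n}{n!}$ for $0\le n\le s-1$ and $J_n^{(\alpha,-s)}(u)=\int_{-1}^{u}\frac{(u-w)^{s-1}}{(s-1)!}\,\widehat P_{n-s}^{(\alpha+s,0)}(w)\,\mathrm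 dw$ for $n\ge s$. *)

theory Defs
  imports "HOL-Analysis.Analysis"
begin

definition jacobiP :: "nat \<Rightarrow> real \<Rightarrow> real \<Rightarrow> real \<Rightarrow> real" where
  "jacobiP n a b u =
     (\<Sum>k=0..n. pochhammer (a + real k + 1) (n - k) * pochhammer (- real n) k
        * pochhammer (real n + a + b + 1) k / (fact n * fact k) * ((1 - u) / 2) ^ k)"

text \<open>Normalising constant A_n^(a,b) = 2^n / (n+a+b+1)_n (only used where the denominator is nonzero).\<close>
definition jacobiA :: "nat \<Rightarrow> real \<Rightarrow> real \<Rightarrow> real" where
  "jacobiA n a b = 2 ^ n / pochhammer (real n + a + b + 1) n"

definition jacobiPhat :: "nat \<Rightarrow> real \<Rightarrow> real \<Rightarrow> real \<Rightarrow> real" where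
  "jacobiPhat n a b u = jacobiA n a b * jacobiP n a b u"

definition int_from_m1 :: "(real \<Rightarrow> real) \<Rightarrow> real \<Rightarrow> real" where
  "int_from_m1 f u = (if -1 \<le> u then integral {-1..u} f else - integral {u..-1} f)"

definition J :: "real \<Rightarrow> nat \<Rightarrow> nat \<Rightarrow> real \<Rightarrow> real" where
  "J a s n u =
     (if n < s then (u + 1) ^ n / fact n
      else int_from_m1 (\<lambda>w. (u - w) ^ (s - 1) / fact (s - 1) * jacobiPhat (n - s) (a + real s) 0 w) u)"

end

theory Submission
  imports Defs
begin


definition jc :: "nat \<Rightarrow> real \<Rightarrow> real \<Rightarrow> nat \<Rightarrow> real" where
  "jc n a b k = pochhammer (a + real k + 1) (n - k) * pochhammer (- real n) k
        * pochhammer (real n + a + b + 1) k / (fact n * fact k)"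

lemma jacobiP_jc: "jacobiP n a b u = (\<Sum>k=0..n. jc n a b k * ((1 - u) / 2) ^ k)"
  unfolding jacobiP_def jc_def by simp

lemma jc_over: "jc n a b (Suc n) = 0"
  unfolding jc_def by (auto simp: pochhammer_eq_0_iff)

lemma poly_t_deriv:
  "((\<lambda>u. \<Sum>k=0..n. c k * ((1 - u) / 2) ^ k) has_real_derivative
     (\<Sum>k=0..n. c k * (real k * ((1 - x) / 2) ^ (k - 1) * (-1/2)))) (at x)"
  by (auto intro!: derivative_eq_intros DERIV_sum simp: algebra_simps)

lemma jacobiP_deriv0:
  "(jacobiP n a b has_real_derivative
     (\<Sum>k=0..n. jc n a b k * (real k * ((1 - x) / 2) ^ (k - 1) * (-1/2)))) (at x)"
  unfolding jacobiP_jc[abs_def] by (rule poly_t_deriv)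

lemma shift_sum:
  "(\<Sum>k=0..m. f k * real k * t ^ (k - 1)) + f (Suc m) * real (Suc m) * t ^ m
   = (\<Sum>k=0..m. f (Suc k) * real (Suc k) * t ^ k)"
  by (induction m) auto


lemma cancel_c: fixes c Z F G :: real shows "c \<noteq> 0 \<Longrightarrow> c * (Z / (F * (c * G))) = Z / (F * G)"
  by (metis mult.left_commute mult_divide_mult_cancel_left_if times_divide_eq_right)
lemma alg1:
  fixes x y a b R U V F G :: real
  assumes "x \<ge> 0"
  shows "(b + x) * ((a + x + 1) * R * U * V / (F * G)) - (x+1) * (R * (U * (- y + x)) * (V * (y + a + b + 1 + x)) / (F * ((x+1) * G))) = (y + b) * (R * (a + y + 1) * U * V / (F * G))"
proof -
  have "x + 1 \<noteq> 0" using assms by simp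
  then have "(x+1) * (R * (U * (- y + x)) * (V * (y + a + b + 1 + x)) / (F * ((x+1) * G))) = R * U * V * ((- y + x) * (y + a + b + 1 + x)) / (F * G)"
    by (subst cancel_c) (simp_all add: ac_simps)
  moreover have "(b + x) * ((a + x + 1) * R * U * V / (F * G)) = R*U*V * ((b+x)*(a+x+1)) / (F*G)" by simp
  moreover have "(y + b) * (R * (a + y + 1) * U * V / (F * G)) = R*U*V*((y+b)*(a+y+1))/(F*G)" by simp
  moreover have "R*U*V * ((b+x)*(a+x+1)) - R * U * V * ((- y + x) * (y + a + b + 1 + x)) = R*U*V*((y+b)*(a+y+1))"
    by algebra
  ultimately show ?thesis by (metis diff_divide_distrib)
qed

lemma jc_term_D:
  assumes "k \<le> m"
  shows "(b + real k) * jc m a b k - real (Suc k) * jc m a b (Suc k)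
         = (real m + b) * jc m (a + 1) (b - 1) k"
proof (cases "k = m")
  case True
  have e: "real m + (a + 1) + (b - 1) + 1 = real m + a + b + 1" by simp
  have z: "pochhammer (- real m) (Suc m) = 0" by (auto simp: pochhammer_eq_0_iff)
  show ?thesis using True unfolding jc_def e by (simp add: z)
next
  case False
  then obtain d where m: "m = k + Suc d" using assms by (metis le_neq_implies_less less_imp_Suc_add add_Suc_right)
  have e: "real m + (a + 1) + (b - 1) + 1 = real m + a + b + 1" by simp
  have e2: "a + real (Suc k) + 1 = a + real k + 1 + 1" by simp
  have e3: "a + 1 + real k + 1 = a + real k + 1 + 1" by simp
  have md: "m - k = Suc d" "m - Suc k = d" using m by auto
  define R where "R = pochhammer (a + real k + 1 + 1) d"
  define U where "U = pochhammer (- real m) k"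
  define V where "V = pochhammer (real m + a + b + 1) k"
  have p1: "pochhammer (a + real k + 1) (m - k) = (a + real k + 1) * R"
    unfolding md R_def by (simp add: pochhammer_rec)
  have p2: "pochhammer (a + 1 + real k + 1) (m - k) = R * (a + real m + 1)"
    unfolding md R_def e3 by (simp add: pochhammer_Suc m algebra_simps)
  have p3: "pochhammer (a + real (Suc k) + 1) (m - Suc k) = R"
    unfolding md R_def e2 by simp
  have p4: "pochhammer (- real m) (Suc k) = U * (- real m + real k)"
    unfolding U_def by (simp add: pochhammer_Suc)
  have p5: "pochhammer (real m + a + b + 1) (Suc k) = V * (real m + a + b + 1 + real k)"
    unfolding V_def by (simp add: pochhammer_Suc)
  have f: "fact (Suc k) = real (Suc k) * fact k" by simp
  have fm: "fact m \<noteq> (0::real)" "fact k \<noteq> (0::real)" by auto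
  show ?thesis
    unfolding jc_def e p1 p2 p3 p4 p5 f U_def[symmetric] V_def[symmetric]
    using alg1[where x="real k" and y="real m" and a=a and b=b and R=R and U=U and V=V and F="fact m" and G="fact k"] by (simp add: ac_simps)
qed

lemma jacobi_D:
  "b * jacobiP m a b u + (1 + u) * (\<Sum>k=0..m. jc m a b k * (real k * ((1 - u) / 2) ^ (k - 1) * (-1/2)))
   = (real m + b) * jacobiP m (a + 1) (b - 1) u"
proof -
  define t where "t = (1 - u) / 2"
  have u: "1 + u = 2 - 2 * t" unfolding t_def by (simp add: field_simps)
  have trm: "(1 + u) * (jc m a b k * (real k * t ^ (k - 1) * (-1/2)))
      = jc m a b k * real k * t ^ k - jc m a b k * real k * t ^ (k - 1)" for k
  proof (cases k)
    case 0 then show ?thesis by simp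
  next
    case (Suc k') then show ?thesis unfolding u by (simp add: field_simps)
  qed
  have 1: "(1 + u) * (\<Sum>k=0..m. jc m a b k * (real k * t ^ (k - 1) * (-1/2)))
      = (\<Sum>k=0..m. jc m a b k * real k * t ^ k) - (\<Sum>k=0..m. jc m a b k * real k * t ^ (k - 1))"
    by (simp only: sum_distrib_left trm sum_subtractf)
  have 2: "(\<Sum>k=0..m. jc m a b k * real k * t ^ (k - 1)) = (\<Sum>k=0..m. jc m a b (Suc k) * real (Suc k) * t ^ k)"
    using shift_sum[where f="jc m a b" and m=m and t=t] by (simp add: jc_over)
  have "b * jacobiP m a b u + (1 + u) * (\<Sum>k=0..m. jc m a b k * (real k * t ^ (k - 1) * (-1/2)))
     = (\<Sum>k=0..m. ((b + real k) * jc m a b k - real (Suc k) * jc m a b (Suc k)) * t ^ k)"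
    unfolding 1 2 jacobiP_jc t_def[symmetric]
    by (simp add: sum_distrib_left sum_subtractf[symmetric] sum.distrib[symmetric] algebra_simps)
  also have "\<dots> = (\<Sum>k=0..m. (real m + b) * jc m (a + 1) (b - 1) k * t ^ k)"
    by (rule sum.cong[OF refl], subst jc_term_D) auto
  also have "\<dots> = (real m + b) * jacobiP m (a + 1) (b - 1) u"
    unfolding jacobiP_jc t_def by (simp add: sum_distrib_left mult.assoc)
  finally show ?thesis unfolding t_def .
qed

lemma jacobi_D_m1:
  "b * jacobiP m a b (-1) = (real m + b) * jacobiP m (a + 1) (b - 1) (-1)"
  using jacobi_D[of b m a "-1"] by simp

lemma jacobi_vanish:
  assumes "1 \<le> r" "r \<le> N"
  shows "jacobiP N \<alpha> (- real r) (-1) = 0"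
  using assms
proof (induction r arbitrary: \<alpha>)
  case 0 then show ?case by simp
next
  case (Suc r)
  show ?case
  proof (cases "r = 0")
    case True
    have "0 * jacobiP N (\<alpha> - 1) 0 (-1) = (real N + 0) * jacobiP N (\<alpha> - 1 + 1) (0 - 1) (-1)"
      by (rule jacobi_D_m1)
    then show ?thesis using True Suc.prems by simp
  next
    case False
    have ih: "jacobiP N (\<alpha> - 1) (- real r) (-1) = 0" using Suc.IH[of "\<alpha> - 1"] Suc.prems False by simp
    have "(- real r) * jacobiP N (\<alpha> - 1) (- real r) (-1) = (real N + - real r) * jacobiP N (\<alpha> - 1 + 1) (- real r - 1) (-1)"
      by (rule jacobi_D_m1)
    moreover have "real N + - real r \<noteq> 0" using Suc.prems by simp
    ultimately have "jacobiP N \<alpha> (- real r - 1) (-1) = 0" using ih by simp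
    moreover have e: "- real (Suc r) = - real r - 1" by simp
    ultimately show ?thesis by (simp only: e)
  qed
qed



lemma taylor_m1:
  fixes D :: "nat \<Rightarrow> real \<Rightarrow> real"
  assumes s: "0 < s"
    and d: "\<And>j x. j < s \<Longrightarrow> (D j has_real_derivative D (Suc j) x) (at x)"
    and z: "\<And>j. j < s \<Longrightarrow> D j (-1) = 0"
  shows "D 0 u = int_from_m1 (\<lambda>w. (u - w) ^ (s - 1) / fact (s - 1) * D s w) u"
proof (cases "-1 \<le> u")
  case True
  have "D 0 u = (\<Sum>i<s. ((u - -1) ^ i / fact i) *\<^sub>R D i (-1))
      + integral {-1..u} (\<lambda>x. ((u - x) ^ (s - 1) / fact (s - 1)) *\<^sub>R D s x)"
    by (rule Taylor_integral[where f="D 0" and Df=D and p=s and a="-1" and b=u])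
      (use s True in \<open>auto intro!: has_field_derivative_at_within d
         simp: has_real_derivative_iff_has_vector_derivative[symmetric]\<close>)
  then show ?thesis using True z unfolding int_from_m1_def by simp
next
  case False
  define E where "E j x = (-1) ^ j * D j (-x)" for j x
  have dE: "(E j has_real_derivative E (Suc j) x) (at x)" if "j < s" for j x
  proof -
    have "((\<lambda>x. D j (-x)) has_real_derivative D (Suc j) (-x) * (-1)) (at x)"
      by (rule DERIV_chain2[OF d[OF that]]) (auto intro!: derivative_eq_intros)
    from DERIV_cmult[OF this, of "(-1)^j"] show ?thesis
      unfolding E_def[abs_def] by (simp add: algebra_simps)
  qed
  have "E 0 (-u) = (\<Sum>i<s. ((-u - 1) ^ i / fact i) *\<^sub>R E i 1)
      + integral {1..-u} (\<lambda>x. ((-u - x) ^ (s - 1) / fact (s - 1)) *\<^sub>R E s x)"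
    by (rule Taylor_integral[where f="E 0" and Df=E and p=s and a="1" and b="-u"])
      (use s False in \<open>auto intro!: has_field_derivative_at_within dE
         simp: has_real_derivative_iff_has_vector_derivative[symmetric]\<close>)
  also have "(\<Sum>i<s. ((-u - 1) ^ i / fact i) *\<^sub>R E i 1) = 0"
    using z by (simp add: E_def)
  also have "(\<lambda>x. ((-u - x) ^ (s - 1) / fact (s - 1)) *\<^sub>R E s x)
      = (\<lambda>x. - ((\<lambda>w. (u - w) ^ (s - 1) / fact (s - 1) * D s w) (-x)))"
  proof
    fix x
    obtain s' where s': "s = Suc s'" using s by (cases s) auto
    have pm: "(-1::real) ^ s' * (-1) ^ Suc s' = -1"
      by (simp add: power_mult_distrib[symmetric])
    have "(-u - x) ^ s' = (-1) ^ s' * (u + x) ^ s'"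
    proof -
      have "-u - x = -(u + x)" by simp
      then show ?thesis by (simp only: power_minus[of "u + x" s'])
    qed
    then have "((-u - x) ^ (s - 1) / fact (s - 1)) *\<^sub>R E s x
      = ((-1) ^ s' * (-1) ^ Suc s') * ((u + x) ^ s' / fact s' * D s (-x))"
      unfolding E_def s' by simp
    then show "((-u - x) ^ (s - 1) / fact (s - 1)) *\<^sub>R E s x
      = - ((\<lambda>w. (u - w) ^ (s - 1) / fact (s - 1) * D s w) (-x))"
      unfolding pm s' by simp
  qed
  also have "integral {1..-u} (\<lambda>x. - ((\<lambda>w. (u - w) ^ (s - 1) / fact (s - 1) * D s w) (-x)))
      = - integral {u..-1} (\<lambda>w. (u - w) ^ (s - 1) / fact (s - 1) * D s w)"
  proof -
    define f where "f = (\<lambda>w. (u - w) ^ (s - 1) / fact (s - 1) * D s w)"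
    have r: "integral {- (-1) .. - u} (\<lambda>x. f (-x)) = integral {u..-1} f" using Henstock_Kurzweil_Integration.integral_reflect_real[where a=u and b="-1" and f=f] by (simp only:)
    have i: "{- (-1) .. - u} = {1..-u::real}" by simp
    show ?thesis using r[unfolded i f_def] by (simp only: integral_neg)
  qed
  finally show ?thesis using False unfolding int_from_m1_def E_def by simp
qed




lemma DP:
  assumes "1 \<le> k"
  shows "((\<lambda>u. (1 + u) ^ k * jacobiP m \<alpha> (real k) u) has_real_derivative
     (real m + real k) * (1 + u) ^ (k - 1) * jacobiP m (\<alpha> + 1) (real k - 1) u) (at u)"
proof -
  define S where "S = (\<Sum>i=0..m. jc m \<alpha> (real k) i * (real i * ((1 - u) / 2) ^ (i - 1) * (-1/2)))"
  have p: "((\<lambda>u. (1 + u) ^ k) has_real_derivative real k * (1 + u) ^ (k - 1)) (at u)"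
    by (auto intro!: derivative_eq_intros)
  have d: "((\<lambda>u. (1 + u) ^ k * jacobiP m \<alpha> (real k) u) has_real_derivative
     (1 + u) ^ k * S + real k * (1 + u) ^ (k - 1) * jacobiP m \<alpha> (real k) u) (at u)"
    unfolding S_def by (rule DERIV_mult'[OF p jacobiP_deriv0])
  have e1: "(1 + u) ^ k * S + real k * (1 + u) ^ (k - 1) * jacobiP m \<alpha> (real k) u
     = (1 + u) ^ (k - 1) * (real k * jacobiP m \<alpha> (real k) u + (1 + u) * S)"
  proof -
    obtain k' where "k = Suc k'" using assms by (cases k) auto
    then show ?thesis by (simp add: algebra_simps)
  qed
  have e3: "real k * jacobiP m \<alpha> (real k) u + (1 + u) * S = (real m + real k) * jacobiP m (\<alpha> + 1) (real k - 1) u"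
    unfolding S_def by (rule jacobi_D)
  show ?thesis by (rule DERIV_cong[OF d]) (unfold e1 e3, simp only: mult_ac)
qed

lemma alg2:
  fixes x y N P U V F G T :: real
  assumes "x \<ge> 0" "y \<ge> 0"
  shows "(P * (- (y + 1) * U) * (N * V) / ((y + 1) * F * ((x + 1) * G))) * ((x + 1) * T * (-1/2))
       = N / 2 * (P * U * V / (F * G) * T)"
proof -
  define c where "c = (y + 1) * (x + 1)"
  have c: "c \<noteq> 0" using assms unfolding c_def by simp
  have 1: "(y + 1) * F * ((x + 1) * G) = c * (F * G)" unfolding c_def by (simp add: ac_simps)
  have 2: "P * (- (y + 1) * U) * (N * V) * ((x + 1) * T * (-1/2)) = c * (N / 2 * (P * U * V * T))"
    unfolding c_def by (simp add: field_simps)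
  have "(P * (- (y + 1) * U) * (N * V) / ((y + 1) * F * ((x + 1) * G))) * ((x + 1) * T * (-1/2))
      = (P * (- (y + 1) * U) * (N * V) * ((x + 1) * T * (-1/2))) / ((y + 1) * F * ((x + 1) * G))"
    by simp
  also have "\<dots> = (c * (N / 2 * (P * U * V * T))) / (c * (F * G))" unfolding 1 2 ..
  also have "\<dots> = (N / 2 * (P * U * V * T)) / (F * G)" using c by simp
  also have "\<dots> = N / 2 * (P * U * V / (F * G) * T)" by simp
  finally show ?thesis .
qed

lemma jacobiP_deriv:
  "(jacobiP (Suc M) a b has_real_derivative
     (real (Suc M) + a + b + 1) / 2 * jacobiP M (a + 1) (b + 1) x) (at x)"
proof -
  have trm: "jc (Suc M) a b (Suc k) * (real (Suc k) * t ^ k * (-1/2))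
     = (real (Suc M) + a + b + 1) / 2 * (jc M (a + 1) (b + 1) k * t ^ k)" if "k \<le> M" for k t
  proof -
    define P where "P = pochhammer (a + 1 + real k + 1) (M - k)"
    define U where "U = pochhammer (- real M) k"
    define V where "V = pochhammer (real M + (a + 1) + (b + 1) + 1) k"
    define N where "N = real (Suc M) + a + b + 1"
    have j1: "jc (Suc M) a b (Suc k) = P * (- (real M + 1) * U) * (N * V) / ((real M + 1) * fact M * ((real k + 1) * fact k))"
    proof -
      have e1: "a + real (Suc k) + 1 = a + 1 + real k + 1" by simp
      have e2: "- real (Suc M) + 1 = - real M" by simp
      have e3: "N + 1 = real M + (a + 1) + (b + 1) + 1" unfolding N_def by simp
      have q1: "pochhammer (- real (Suc M)) (Suc k) = - (real M + 1) * U"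
        unfolding pochhammer_rec e2 U_def by simp
      have q2: "pochhammer (real (Suc M) + a + b + 1) (Suc k) = N * V"
        unfolding N_def[symmetric] pochhammer_rec e3 V_def ..
      have q3: "pochhammer (a + real (Suc k) + 1) (Suc M - Suc k) = P"
        unfolding P_def e1 by simp
      show ?thesis unfolding jc_def q1 q2 q3 by (simp add: algebra_simps)
    qed
    have j2: "jc M (a + 1) (b + 1) k = P * U * V / (fact M * fact k)"
      unfolding jc_def P_def U_def V_def by simp
    show ?thesis unfolding j1 j2 N_def[symmetric]
      using alg2[where x="real k" and y="real M" and N=N and P=P and U=U and V=V and F="fact M" and G="fact k" and T="t^k"]
      by (simp add: algebra_simps)
  qed
  have "(jacobiP (Suc M) a b has_real_derivative
     (\<Sum>k=0..Suc M. jc (Suc M) a b k * (real k * ((1 - x) / 2) ^ (k - 1) * (-1/2)))) (at x)"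
    by (rule jacobiP_deriv0)
  also have "(\<Sum>k=0..Suc M. jc (Suc M) a b k * (real k * ((1 - x) / 2) ^ (k - 1) * (-1/2)))
     = (\<Sum>k=0..M. jc (Suc M) a b (Suc k) * (real (Suc k) * ((1 - x) / 2) ^ k * (-1/2)))"
    by (subst sum.atLeast0_atMost_Suc_shift) simp
  also have "\<dots> = (\<Sum>k=0..M. (real (Suc M) + a + b + 1) / 2 * (jc M (a + 1) (b + 1) k * ((1 - x) / 2) ^ k))"
    by (rule sum.cong[OF refl]) (simp only: trm atLeastAtMost_iff)
  also have "\<dots> = (real (Suc M) + a + b + 1) / 2 * jacobiP M (a + 1) (b + 1) x"
    by (simp add: jacobiP_jc sum_distrib_left)
  finally show ?thesis .
qed



lemma part1:
  fixes a :: real and s m :: nat and u :: real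
  assumes "a > -1" and "s \<ge> 1"
  shows "J a s (m + s) u = fact m / fact (m + s) * (1 + u) ^ s * jacobiPhat m a (real s) u"
proof -
  define c1 where "c1 = fact m / fact (m + s) * jacobiA m (a + real s) 0"
  define D1 where "D1 j u = c1 * (fact (m + s) / fact (m + s - j)) * (1 + u) ^ (s - j)
      * jacobiP m (a + real j) (real (s - j)) u" for j u
  have d: "(D1 j has_real_derivative D1 (Suc j) x) (at x)" if "j < s" for j x
  proof -
    define C where "C = c1 * (fact (m + s) / fact (m + s - j))"
    have f: "D1 j = (\<lambda>u. C * ((1 + u) ^ (s - j) * jacobiP m (a + real j) (real (s - j)) u))"
      by (rule ext) (simp add: D1_def C_def mult.assoc)
    have dp: "((\<lambda>u. (1 + u) ^ (s - j) * jacobiP m (a + real j) (real (s - j)) u) has_real_derivative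
       (real m + real (s - j)) * (1 + x) ^ (s - j - 1) * jacobiP m (a + real j + 1) (real (s - j) - 1) x) (at x)"
      by (rule DP) (use that in simp)
    define q where "q = m + s - Suc j"
    have q1: "m + s - j = Suc q" unfolding q_def using that by simp
    have q2: "real m + real (s - j) = real q + 1" unfolding q_def using that by simp
    have e1: "s - j - 1 = s - Suc j" by simp
    have e2: "a + real j + 1 = a + real (Suc j)" by simp
    have e3: "real (s - j) - 1 = real (s - Suc j)" using that by simp
    have "C * ((real m + real (s - j)) * (1 + x) ^ (s - j - 1) * jacobiP m (a + real j + 1) (real (s - j) - 1) x)
       = D1 (Suc j) x"
    proof -
      have fq: "fact (Suc q) = (real q + 1) * (fact q::real)" by simp
      have r: "real q + 1 \<noteq> 0" "fact q \<noteq> (0::real)" by auto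
      show ?thesis
        unfolding D1_def C_def q1 q2 e1 e2 e3 q_def[symmetric] fq using r
        by (simp add: divide_simps)
    qed
    then show ?thesis unfolding f by (rule DERIV_cong[OF DERIV_cmult[OF dp]])
  qed
  have z: "D1 j (-1) = 0" if "j < s" for j
    using that by (simp add: D1_def)
  have t: "D1 0 u = int_from_m1 (\<lambda>w. (u - w) ^ (s - 1) / fact (s - 1) * D1 s w) u"
    by (rule taylor_m1) (use assms d z in auto)
  have Ds: "D1 s w = jacobiPhat m (a + real s) 0 w" for w
    unfolding D1_def c1_def jacobiPhat_def by simp
  have "J a s (m + s) u = D1 0 u"
    unfolding t Ds J_def by simp
  also have "\<dots> = fact m / fact (m + s) * (1 + u) ^ s * jacobiPhat m a (real s) u"
  proof -
    have "jacobiA m (a + real s) 0 = jacobiA m a (real s)"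
      unfolding jacobiA_def by (simp add: algebra_simps)
    then show ?thesis unfolding D1_def c1_def jacobiPhat_def by simp
  qed
  finally show ?thesis .
qed

lemma part2:
  fixes a :: real and s n :: nat and u :: real
  assumes "a > -1" and "s \<ge> 1" and "n \<ge> s"
  shows "J a s n u = 2 ^ s / pochhammer (real n + a - real s + 1) s
                       * jacobiA (n - s) a (real s) * jacobiP n a (- real s) u"
proof -
  define m where "m = n - s"
  define Q where "Q = pochhammer (real n + a - real s + 1) s"
  have Qpos: "Q > 0" unfolding Q_def using assms by (intro pochhammer_pos) simp
  define c2 where "c2 = jacobiA m (a + real s) 0 * 2 ^ s / Q"
  define D2 where "D2 j u = c2 * pochhammer (real n + a - real s + 1) j / 2 ^ j
      * jacobiP (n - j) (a + real j) (real j - real s) u" for j u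
  have d: "(D2 j has_real_derivative D2 (Suc j) x) (at x)" if "j < s" for j x
  proof -
    define C where "C = c2 * pochhammer (real n + a - real s + 1) j / 2 ^ j"
    have nj: "n - j = Suc (n - Suc j)" using that assms by simp
    have f: "D2 j = (\<lambda>u. C * jacobiP (Suc (n - Suc j)) (a + real j) (real j - real s) u)"
      by (rule ext) (simp add: D2_def C_def nj)
    have dp: "(jacobiP (Suc (n - Suc j)) (a + real j) (real j - real s) has_real_derivative
       (real (Suc (n - Suc j)) + (a + real j) + (real j - real s) + 1) / 2
         * jacobiP (n - Suc j) (a + real j + 1) (real j - real s + 1) x) (at x)"
      by (rule jacobiP_deriv)
    have e0: "real (Suc (n - Suc j)) + (a + real j) + (real j - real s) + 1
        = real n + a - real s + 1 + real j" using that assms by simp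
    have e2: "a + real j + 1 = a + real (Suc j)" by simp
    have e3: "real j - real s + 1 = real (Suc j) - real s" by simp
    have "C * ((real (Suc (n - Suc j)) + (a + real j) + (real j - real s) + 1) / 2
         * jacobiP (n - Suc j) (a + real j + 1) (real j - real s + 1) x) = D2 (Suc j) x"
      unfolding D2_def C_def e0 e2 e3 pochhammer_Suc by (simp add: field_simps)
    then show ?thesis unfolding f by (rule DERIV_cong[OF DERIV_cmult[OF dp]])
  qed
  have z: "D2 j (-1) = 0" if "j < s" for j
  proof -
    have eq: "real j - real s = - real (s - j)" using that by simp
    have v: "jacobiP (n - j) (a + real j) (- real (s - j)) (-1) = 0"
      by (rule jacobi_vanish) (use that assms in auto)
    show ?thesis unfolding D2_def eq v by simp
  qed
  have t: "D2 0 u = int_from_m1 (\<lambda>w. (u - w) ^ (s - 1) / fact (s - 1) * D2 s w) u"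
    by (rule taylor_m1) (use assms d z in auto)
  have Ds: "D2 s w = jacobiPhat (n - s) (a + real s) 0 w" for w
    unfolding D2_def c2_def jacobiPhat_def m_def Q_def[symmetric] using Qpos by simp
  have "J a s n u = D2 0 u"
    unfolding t Ds J_def using assms by simp
  also have "\<dots> = 2 ^ s / Q * jacobiA (n - s) a (real s) * jacobiP n a (- real s) u"
  proof -
    have "jacobiA m (a + real s) 0 = jacobiA m a (real s)"
      unfolding jacobiA_def by (simp add: algebra_simps)
    then show ?thesis unfolding D2_def c2_def m_def by simp
  qed
  finally show ?thesis unfolding Q_def .
qed


theorem mainTheorem1:
  fixes a :: real and s n :: nat and u :: real
  assumes "a > -1" and "s \<ge> 1" and "n \<ge> s"
  shows "J a s n u = fact (n - s) / fact n * (1 + u) ^ s * jacobiPhat (n - s) a (real s) u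
       \<and> J a s n u = (-1) ^ s * 2 ^ s / pochhammer (- a - real n) s
                       * jacobiA (n - s) a (real s) * jacobiP n a (- real s) u"
proof
  have nn: "n - s + s = n" using assms by simp
  show "J a s n u = fact (n - s) / fact n * (1 + u) ^ s * jacobiPhat (n - s) a (real s) u"
    using part1[of a s "n - s" u] assms unfolding nn by simp
next
  define Q where "Q = pochhammer (real n + a - real s + 1) s"
  have pm: "pochhammer (- a - real n) s = (-1) ^ s * Q"
  proof -
    have "pochhammer (- (a + real n)) s = (-1) ^ s * pochhammer (a + real n - of_nat s + 1) s"
      by (rule pochhammer_minus)
    moreover have "- (a + real n) = - a - real n" "a + real n - of_nat s + 1 = real n + a - real s + 1"
      by simp_all
    ultimately show ?thesis unfolding Q_def by simp
  qed
  have c: "(-1) ^ s * 2 ^ s / pochhammer (- a - real n) s = (2::real) ^ s / Q"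
    unfolding pm by (rule mult_divide_mult_cancel_left) simp
  show "J a s n u = (-1) ^ s * 2 ^ s / pochhammer (- a - real n) s
                       * jacobiA (n - s) a (real s) * jacobiP n a (- real s) u"
    unfolding c Q_def using part2[OF assms] .
qed

end
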